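(* Let $n\ge1$ and let $c:E_n\to\mathbb C$ be an admissible edge weighting of $Q_n$ with $c(ij)\ne0$ for all edges $ij\in E_n$. Then there is $\mathbf t=[t_0,\dots,t_{n-1}]\in\Delta_{n-1}$ such that $|c(ij)|=\sqrt{t_k}$ for all edges $ij\in E_n$ with $i = j\#k$.
   Context: For $n\ge1$, identify integers $0\le i<2^n$ with their $n$-digit binary representations; $i\#k$ is $i$ with its $k$-th digit flipped. The hypercube $Q_n$ has vertex classes $U_n$ (even number of $1$'s) and $V_n$ (odd number of $1$'s) and edge set $E_n$ of pairs $ij$ ($i\in U_n$, $j\in V_n$, $j=i\#k$ for some $k<n$); $\mathcal N(x)$ is the set of neighbors of $x$. $\Delta_{n-1}=\{[t_0,\dots,t_{n-1}]\mid t_k\ge0,\sum t_k=1\}$. For $c:E_n\to\mathbb C$, $U_n(c)$, $V_n(c)$ are the vertices of $U_n$, $V_n$ incident to some edge with nonzero weight; $c$ is admissible if $\sum_{i\in\mathcal N(j_1)\cap\mathcal N(j_2)}c(ij_1)\overline{c(ij_2)}=\delta_{j_1j_2}$ for all $j_1,j_2\in V_n(c)$ and $\sum_{j\in\mathcal N(i_1)\cap\mathcal N(i_2)}c(i_1j)\overline{c(i_2j)}=\delta_{i_1i_2}$ for all $i_1,i_2\in U_n(c)$. *)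

theory Defs
  imports "HOL-Analysis.Analysis"
begin

text \<open>Vertices of Q_n: naturals i < 2^n, identified with their n binary digits;
  digit k of i is bit i k.\<close>

definition verts :: "nat \<Rightarrow> nat set" where
  "verts n = {..<2^n}"

definition ones :: "nat \<Rightarrow> nat \<Rightarrow> nat" where
  "ones n i = card {k. k < n \<and> bit i k}"

definition flip :: "nat \<Rightarrow> nat \<Rightarrow> nat" where
  "flip i k = (if bit i k then i - 2^k else i + 2^k)"

definition Uv :: "nat \<Rightarrow> nat set" where
  "Uv n = {i \<in> verts n. even (ones n i)}"

definition Vv :: "nat \<Rightarrow> nat set" where
  "Vv n = {j \<in> verts n. odd (ones n j)}"

definition edges :: "nat \<Rightarrow> (nat \<times> nat) set" where
  "edges n = {(i, j). i \<in> Uv n \<and> j \<in> Vv n \<and> (\<exists>k<n. j = flip i k)}"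

definition nbrs :: "nat \<Rightarrow> nat \<Rightarrow> nat set" where
  "nbrs n x = {y \<in> verts n. \<exists>k<n. y = flip x k}"

text \<open>An edge weighting is a function c on pairs; only its values on edges matter.\<close>

definition Uc :: "nat \<Rightarrow> (nat \<Rightarrow> nat \<Rightarrow> complex) \<Rightarrow> nat set" where
  "Uc n c = {i \<in> Uv n. \<exists>j. (i, j) \<in> edges n \<and> c i j \<noteq> 0}"

definition Vc :: "nat \<Rightarrow> (nat \<Rightarrow> nat \<Rightarrow> complex) \<Rightarrow> nat set" where
  "Vc n c = {j \<in> Vv n. \<exists>i. (i, j) \<in> edges n \<and> c i j \<noteq> 0}"

definition admissible :: "nat \<Rightarrow> (nat \<Rightarrow> nat \<Rightarrow> complex) \<Rightarrow> bool" where
  "admissible n c \<longleftrightarrow>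
     (\<forall>j1\<in>Vc n c. \<forall>j2\<in>Vc n c.
        (\<Sum>i\<in>nbrs n j1 \<inter> nbrs n j2. c i j1 * cnj (c i j2)) = (if j1 = j2 then 1 else 0)) \<and>
     (\<forall>i1\<in>Uc n c. \<forall>i2\<in>Uc n c.
        (\<Sum>j\<in>nbrs n i1 \<inter> nbrs n i2. c i1 j * cnj (c i2 j)) = (if i1 = i2 then 1 else 0))"

definition Delta :: "nat \<Rightarrow> (nat \<Rightarrow> real) set" where
  "Delta n = {t. (\<forall>k<n. t k \<ge> 0) \<and> (\<Sum>k<n. t k) = 1}"

end

theory Submission
  imports Defs
begin

lemma flip_eq_fb: "flip i k = flip_bit k i"
proof -
  have A: "int (flip_bit k i) = flip_bit k (int i)" by (rule of_nat_flip_bit_eq)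
  have B: "flip_bit k (int i) = (if bit (int i) k then int i - 2^k else int i + 2^k)"
    by (simp add: flip_bit_eq_if set_bit_eq unset_bit_eq)
  have C: "int (flip_bit k i) = (if bit i k then int i - 2^k else int i + 2^k)"
    using A B by (simp add: bit_of_nat_iff)
  show ?thesis
  proof (cases "bit i k")
    case True
    with C have "int (flip_bit k i) = int i - 2^k" by simp
    then have "int (flip_bit k i + 2^k) = int i" by simp
    then have "flip_bit k i + 2^k = i" using of_nat_eq_iff by blast
    then have "flip_bit k i = i - 2^k" by linarith
    then show ?thesis using True by (simp add: flip_def)
  next
    case False
    with C have "int (flip_bit k i) = int i + 2^k" by simp
    then have "int (flip_bit k i) = int (i + 2^k)" by simp
    then have "flip_bit k i = i + 2^k" using of_nat_eq_iff by blast
    then show ?thesis using False by (simp add: flip_def)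
  qed
qed

lemma bit_flip: "bit (flip i k) m = (if m = k then \<not> bit i k else bit i m)"
  by (auto simp: flip_eq_fb bit_flip_bit_iff)

lemma flip_flip[simp]: "flip (flip i k) k = i"
  by (rule bit_eqI) (auto simp: bit_flip)

lemma flip_comm: "flip (flip i k) l = flip (flip i l) k"
  by (rule bit_eqI) (auto simp: bit_flip)

lemma flip_neq: "flip i k \<noteq> i"
  by (metis bit_flip)

lemma flip_inj: "flip i a = flip i b \<Longrightarrow> a = b"
  by (metis bit_flip)

lemma verts_iff: "x \<in> verts n \<longleftrightarrow> take_bit n x = x"
  by (simp add: verts_def take_bit_nat_eq_self_iff)

lemma flip_verts: "i \<in> verts n \<Longrightarrow> k < n \<Longrightarrow> flip i k \<in> verts n"
  by (simp add: verts_iff flip_eq_fb take_bit_flip_bit_eq)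

lemma ones_flip: assumes "k < n" shows "even (ones n (flip i k)) \<longleftrightarrow> odd (ones n i)"
proof -
  let ?S = "{m. m < n \<and> bit i m}"
  let ?T = "{m. m < n \<and> bit (flip i k) m}"
  have fS: "finite ?S" "finite ?T" by auto
  show ?thesis
  proof (cases "bit i k")
    case True
    then have "?S = insert k ?T" "k \<notin> ?T" using assms by (auto simp: bit_flip)
    then have "card ?S = Suc (card ?T)" using fS by simp
    then show ?thesis by (simp add: ones_def)
  next
    case False
    then have "?T = insert k ?S" "k \<notin> ?S" using assms by (auto simp: bit_flip)
    then have "card ?T = Suc (card ?S)" using fS by simp
    then show ?thesis by (simp add: ones_def)
  qed
qed

lemma U_flip: "i \<in> Uv n \<Longrightarrow> k < n \<Longrightarrow> flip i k \<in> Vv n"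
  using ones_flip[of k n i] flip_verts by (auto simp: Uv_def Vv_def)

lemma V_flip: "j \<in> Vv n \<Longrightarrow> k < n \<Longrightarrow> flip j k \<in> Uv n"
  using ones_flip[of k n j] flip_verts by (auto simp: Uv_def Vv_def)

lemma edge_iff: "(i, j) \<in> edges n \<longleftrightarrow> i \<in> Uv n \<and> (\<exists>k<n. j = flip i k)"
  using U_flip by (auto simp: edges_def)

lemma zero_U: "0 \<in> Uv n"
  by (simp add: Uv_def verts_def ones_def)

lemma two_case1:
  assumes "k \<noteq> l" "flip (flip x k) a = flip (flip x l) b"
  shows "(a = l \<and> b = k) \<or> (a = k \<and> b = l)"
proof -
  have "bit (flip (flip x k) a) m = bit (flip (flip x l) b) m" for m using assms(2) by simp
  from this[of k] this[of l] show ?thesis using assms(1) by (auto simp: bit_flip split: if_splits)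
qed

lemma two_case2:
  assumes "k \<noteq> l" "flip x a = flip (flip (flip x k) l) b"
  shows "(a = k \<and> b = l) \<or> (a = l \<and> b = k)"
proof -
  have "bit (flip x a) m = bit (flip (flip (flip x k) l) b) m" for m using assms(2) by simp
  from this[of k] this[of l] show ?thesis using assms(1) by (auto simp: bit_flip split: if_splits)
qed

lemma common1:
  assumes "x \<in> verts n" "k < n" "l < n" "k \<noteq> l"
  shows "nbrs n (flip x k) \<inter> nbrs n (flip x l) = {x, flip (flip x k) l}"
proof
  show "nbrs n (flip x k) \<inter> nbrs n (flip x l) \<subseteq> {x, flip (flip x k) l}"
  proof
    fix y assume "y \<in> nbrs n (flip x k) \<inter> nbrs n (flip x l)"
    then obtain a b where "y = flip (flip x k) a" "y = flip (flip x l) b" unfolding nbrs_def by blast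
    then show "y \<in> {x, flip (flip x k) l}" using two_case1[OF assms(4), of x a b] by auto
  qed
  have "x = flip (flip x k) k" "x = flip (flip x l) l" "flip (flip x k) l = flip (flip x l) k"
    by (simp, simp, rule flip_comm)
  moreover have "flip (flip x k) l \<in> verts n" using assms flip_verts by blast
  ultimately show "{x, flip (flip x k) l} \<subseteq> nbrs n (flip x k) \<inter> nbrs n (flip x l)"
    using assms unfolding nbrs_def by auto
qed

lemma common2:
  assumes "x \<in> verts n" "k < n" "l < n" "k \<noteq> l"
  shows "nbrs n x \<inter> nbrs n (flip (flip x k) l) = {flip x k, flip x l}"
proof
  show "nbrs n x \<inter> nbrs n (flip (flip x k) l) \<subseteq> {flip x k, flip x l}"
  proof
    fix y assume "y \<in> nbrs n x \<inter> nbrs n (flip (flip x k) l)"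
    then obtain a b where "y = flip x a" "y = flip (flip (flip x k) l) b" unfolding nbrs_def by blast
    then show "y \<in> {flip x k, flip x l}" using two_case2[OF assms(4), of x a b] by auto
  qed
  have "flip x k = flip (flip (flip x k) l) l" "flip x l = flip (flip (flip x k) l) k"
    by (simp, metis flip_comm flip_flip)
  then show "{flip x k, flip x l} \<subseteq> nbrs n x \<inter> nbrs n (flip (flip x k) l)"
    using assms flip_verts unfolding nbrs_def by auto
qed


lemma verts_UV: "x \<in> verts n \<Longrightarrow> x \<in> Uv n \<or> x \<in> Vv n"
  by (auto simp: Uv_def Vv_def)

lemma UV_disj: "x \<in> Uv n \<Longrightarrow> x \<notin> Vv n"
  by (auto simp: Uv_def Vv_def)

lemma in_Vc:
  assumes nz: "\<forall>(i, j)\<in>edges n. c i j \<noteq> 0" and j: "j \<in> Vv n" and k: "k < n"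
  shows "j \<in> Vc n c"
proof -
  have e: "(flip j k, j) \<in> edges n" using V_flip[OF j k] k by (auto simp: edge_iff intro!: exI[of _ k])
  then show ?thesis using nz j unfolding Vc_def by blast
qed

lemma in_Uc:
  assumes nz: "\<forall>(i, j)\<in>edges n. c i j \<noteq> 0" and i: "i \<in> Uv n" and k: "k < n"
  shows "i \<in> Uc n c"
proof -
  have e: "(i, flip i k) \<in> edges n" using i k by (auto simp: edge_iff)
  then show ?thesis using nz i unfolding Uc_def by blast
qed

lemma real_sq_lemma:
  fixes A B D E :: real
  assumes "A > 0" "B > 0" "D > 0" "E > 0" "A * B = D * E" "A * D = B * E"
  shows "A = E"
proof -
  have "(A * A) * (B * D) = (E * E) * (B * D)"
    using assms(5,6) by (metis mult.assoc mult.commute)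
  then have "A * A = E * E" using assms(2,3) by simp
  then show ?thesis using assms(1,4)
    by (metis abs_of_pos power2_eq_square real_sqrt_abs)
qed

lemma square:
  assumes adm: "admissible n c" and nz: "\<forall>(i, j)\<in>edges n. c i j \<noteq> 0"
    and x: "x \<in> Uv n" and k: "k < n" and l: "l < n" and kl: "k \<noteq> l"
  shows "cmod (c x (flip x k)) = cmod (c (flip (flip x k) l) (flip x l))"
proof -
  define j1 where "j1 = flip x k"
  define j2 where "j2 = flip x l"
  define i2 where "i2 = flip j1 l"
  have xv: "x \<in> verts n" using x by (simp add: Uv_def)
  have j1V: "j1 \<in> Vv n" unfolding j1_def using U_flip[OF x k] .
  have j2V: "j2 \<in> Vv n" unfolding j2_def using U_flip[OF x l] .
  have i2U: "i2 \<in> Uv n" unfolding i2_def using V_flip[OF j1V l] .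
  have xi2: "x \<noteq> i2" unfolding i2_def j1_def
    by (metis bit_flip kl)
  have j12: "j1 \<noteq> j2" unfolding j1_def j2_def using flip_inj kl by blast
  have i2j2: "flip i2 k = j2" unfolding i2_def j1_def j2_def by (metis flip_comm flip_flip)
  have i2j1: "flip i2 l = j1" unfolding i2_def by simp
  have e1: "(x, j1) \<in> edges n" using x k by (auto simp: edge_iff j1_def)
  have e2: "(x, j2) \<in> edges n" using x l by (auto simp: edge_iff j2_def)
  have e3: "(i2, j1) \<in> edges n" using i2U l i2j1 by (auto simp: edge_iff)
  have e4: "(i2, j2) \<in> edges n" using i2U k i2j2 by (auto simp: edge_iff)
  have a: "c x j1 \<noteq> 0" using nz e1 by blast
  have b: "c x j2 \<noteq> 0" using nz e2 by blast
  have d: "c i2 j1 \<noteq> 0" using nz e3 by blast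
  have e: "c i2 j2 \<noteq> 0" using nz e4 by blast
  have Vc1: "j1 \<in> Vc n c" using in_Vc[OF nz j1V k] .
  have Vc2: "j2 \<in> Vc n c" using in_Vc[OF nz j2V k] .
  have Uc1: "x \<in> Uc n c" using in_Uc[OF nz x k] .
  have Uc2: "i2 \<in> Uc n c" using in_Uc[OF nz i2U k] .
  have s1: "(\<Sum>i\<in>nbrs n j1 \<inter> nbrs n j2. c i j1 * cnj (c i j2)) = 0"
    using adm Vc1 Vc2 j12 unfolding admissible_def by auto
  have n1: "nbrs n j1 \<inter> nbrs n j2 = {x, i2}"
    unfolding j1_def j2_def i2_def using common1[OF xv k l kl] .
  have eq1: "c x j1 * cnj (c x j2) + c i2 j1 * cnj (c i2 j2) = 0"
    using s1 xi2 unfolding n1 by simp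
  have s2: "(\<Sum>j\<in>nbrs n x \<inter> nbrs n i2. c x j * cnj (c i2 j)) = 0"
    using adm Uc1 Uc2 xi2 unfolding admissible_def by auto
  have n2: "nbrs n x \<inter> nbrs n i2 = {j1, j2}"
    unfolding j1_def j2_def i2_def using common2[OF xv k l kl] .
  have eq2: "c x j1 * cnj (c i2 j1) + c x j2 * cnj (c i2 j2) = 0"
    using s2 j12 unfolding n2 by simp
  have r1: "cmod (c x j1) * cmod (c x j2) = cmod (c i2 j1) * cmod (c i2 j2)"
  proof -
    have "c x j1 * cnj (c x j2) = - (c i2 j1 * cnj (c i2 j2))" using eq1 by (simp add: eq_neg_iff_add_eq_0)
    then have "cmod (c x j1 * cnj (c x j2)) = cmod (c i2 j1 * cnj (c i2 j2))" by (metis norm_minus_cancel)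
    then show ?thesis by (simp add: norm_mult)
  qed
  have r2: "cmod (c x j1) * cmod (c i2 j1) = cmod (c x j2) * cmod (c i2 j2)"
  proof -
    have "c x j1 * cnj (c i2 j1) = - (c x j2 * cnj (c i2 j2))" using eq2 by (simp add: eq_neg_iff_add_eq_0)
    then have "cmod (c x j1 * cnj (c i2 j1)) = cmod (c x j2 * cnj (c i2 j2))" by (metis norm_minus_cancel)
    then show ?thesis by (simp add: norm_mult)
  qed
  have "cmod (c x j1) = cmod (c i2 j2)"
    using real_sq_lemma[OF _ _ _ _ r1 r2] a b d e by simp
  then show ?thesis unfolding j1_def j2_def i2_def by simp
qed

definition gk :: "nat \<Rightarrow> (nat \<Rightarrow> nat \<Rightarrow> complex) \<Rightarrow> nat \<Rightarrow> nat \<Rightarrow> real" where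
  "gk n c k x = (if x \<in> Uv n then cmod (c x (flip x k)) else cmod (c (flip x k) x))"

lemma gk_flip_U:
  assumes adm: "admissible n c" and nz: "\<forall>(i, j)\<in>edges n. c i j \<noteq> 0"
    and x: "x \<in> Uv n" and k: "k < n" and l: "l < n"
  shows "gk n c k (flip x l) = gk n c k x"
proof (cases "l = k")
  case True
  have "flip x k \<notin> Uv n" using U_flip[OF x k] UV_disj by blast
  then show ?thesis using True x by (simp add: gk_def)
next
  case False
  have "flip x l \<notin> Uv n" using U_flip[OF x l] UV_disj by blast
  then have "gk n c k (flip x l) = cmod (c (flip (flip x k) l) (flip x l))"
    by (simp add: gk_def flip_comm)
  also have "\<dots> = gk n c k x" using square[OF adm nz x k l] False x by (simp add: gk_def)
  finally show ?thesis .
qed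

lemma gk_flip:
  assumes adm: "admissible n c" and nz: "\<forall>(i, j)\<in>edges n. c i j \<noteq> 0"
    and x: "x \<in> verts n" and k: "k < n" and l: "l < n"
  shows "gk n c k (flip x l) = gk n c k x"
proof (cases "x \<in> Uv n")
  case True
  then show ?thesis using gk_flip_U[OF adm nz _ k l] by blast
next
  case False
  then have "x \<in> Vv n" using verts_UV[OF x] by blast
  then have y: "flip x l \<in> Uv n" using V_flip l by blast
  show ?thesis using gk_flip_U[OF adm nz y k l] by simp
qed

lemma gk_const:
  assumes adm: "admissible n c" and nz: "\<forall>(i, j)\<in>edges n. c i j \<noteq> 0" and k: "k < n"
  shows "x \<in> verts n \<Longrightarrow> gk n c k x = gk n c k 0"
proof (induction x rule: less_induct)
  case (less x)
  show ?case
  proof (cases "x = 0")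
    case True then show ?thesis by simp
  next
    case False
    then obtain b where bb: "bit x b" using bit_eq_iff[of x 0] by auto
    have bn: "b < n"
    proof (rule ccontr)
      assume "\<not> b < n"
      then have "\<not> bit (take_bit n x) b" by (simp add: bit_take_bit_iff)
      then show False using less.prems bb by (simp add: verts_iff)
    qed
    have lt: "flip x b < x" using bb False by (simp add: flip_def)
    have fv: "flip x b \<in> verts n" using flip_verts[OF less.prems bn] .
    have "gk n c k x = gk n c k (flip x b)" using gk_flip[OF adm nz less.prems k bn] by simp
    also have "\<dots> = gk n c k 0" using less.IH[OF lt fv] .
    finally show ?thesis .
  qed
qed

theorem lemma5p1:
  fixes n :: nat and c :: "nat \<Rightarrow> nat \<Rightarrow> complex"
  assumes "n \<ge> 1"
    and "admissible n c"
    and "\<forall>(i, j)\<in>edges n. c i j \<noteq> 0"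
  shows "\<exists>t\<in>Delta n. \<forall>(i, j)\<in>edges n. \<forall>k<n. i = flip j k \<longrightarrow> cmod (c i j) = sqrt (t k)"
proof -
  note adm = assms(2) and nz = assms(3)
  define t where "t k = (cmod (c 0 (flip 0 k)))^2" for k
  have tk: "sqrt (t k) = cmod (c 0 (flip 0 k))" for k by (simp add: t_def)
  have z0: "(0::nat) \<in> verts n" using zero_U by (simp add: Uv_def)
  have "0 \<in> Uc n c" using in_Uc[OF nz zero_U, of 0] assms(1) by simp
  moreover have "\<forall>i1\<in>Uc n c. \<forall>i2\<in>Uc n c.
        (\<Sum>j\<in>nbrs n i1 \<inter> nbrs n i2. c i1 j * cnj (c i2 j)) = (if i1 = i2 then 1 else 0)"
    using adm unfolding admissible_def by blast
  ultimately have "(\<Sum>j\<in>nbrs n 0 \<inter> nbrs n 0. c 0 j * cnj (c 0 j)) = 1" by fastforce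
  then have s: "(\<Sum>j\<in>nbrs n 0. c 0 j * cnj (c 0 j)) = 1" by simp
  have nb: "nbrs n 0 = flip 0 ` {..<n}"
    using flip_verts[OF z0] unfolding nbrs_def by auto
  have inj: "inj_on (flip 0) {..<n}" using flip_inj by (meson inj_onI)
  have "(\<Sum>k<n. c 0 (flip 0 k) * cnj (c 0 (flip 0 k))) = 1"
    using s unfolding nb sum.reindex[OF inj] by simp
  then have "(\<Sum>k<n. complex_of_real (t k)) = 1"
    unfolding t_def complex_norm_square by simp
  then have "complex_of_real (\<Sum>k<n. t k) = complex_of_real 1" by simp
  then have sum1: "(\<Sum>k<n. t k) = 1" using of_real_eq_iff by blast
  have tD: "t \<in> Delta n" using sum1 by (simp add: Delta_def t_def)
  have key: "cmod (c i j) = sqrt (t k)" if p: "(i, j) \<in> edges n" and k: "k < n" and ik: "i = flip j k" for i j k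
  proof -
    from p obtain k' where iU: "i \<in> Uv n" and k': "k' < n" "j = flip i k'" by (auto simp: edge_iff)
    have "flip (flip i k') k = flip (flip i k') k'" using ik k' by simp
    then have "k = k'" using flip_inj by blast
    then have jj: "j = flip i k" using k' by simp
    have iv: "i \<in> verts n" using iU by (simp add: Uv_def)
    have "cmod (c i j) = gk n c k i" using iU jj by (simp add: gk_def)
    also have "\<dots> = gk n c k 0" using gk_const[OF adm nz k iv] .
    also have "\<dots> = sqrt (t k)" using zero_U tk by (simp add: gk_def)
    finally show ?thesis .
  qed
  have "\<forall>(i, j)\<in>edges n. \<forall>k<n. i = flip j k \<longrightarrow> cmod (c i j) = sqrt (t k)"
  proof (rule ballI)
    fix p assume "p \<in> edges n"
    then show "case p of (i, j) \<Rightarrow> \<forall>k<n. i = flip j k \<longrightarrow> cmod (c i j) = sqrt (t k)"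
      using key by (cases p) auto
  qed
  with tD show ?thesis by blast
qed

end
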